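(* For every finite tree $T$, the dominating ideal $DI(T)$ is normally torsion-free.
   Context: For a simple graph $G$, $N_G[i]=\{j:\{i,j\}\in E(G)\}\cup\{i\}$. A set $S\subseteq V(G)$ is a dominating set if $S\cap N_G[v]\ne\emptyset$ for all $v\in V(G)$; it is minimal if it contains no other dominating set properly. With a variable $x_j$ per vertex in a polynomial ring over a field $K$, $DI(G)=(\prod_{i\in S}x_i : S \text{ a minimal dominating set of } G)$. An ideal $I$ is normally torsion-free if $\mathrm{Ass}(R/I^k)\subseteq\mathrm{Ass}(R/I)$ for all $k\ge1$. *)

theory Defs
  imports Main "HOL-Library.Poly_Mapping"
begin

text \<open>A simple graph has vertex set UNIV of the (finite) type 'v and a
symmetric, irreflexive adjacency relation E.\<close>

definition simple_graph :: "('v \<Rightarrow> 'v \<Rightarrow> bool) \<Rightarrow> bool" where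
  "simple_graph E \<longleftrightarrow> (\<forall>u v. E u v \<longrightarrow> E v u) \<and> (\<forall>v. \<not> E v v)"

definition connected_graph :: "('v \<Rightarrow> 'v \<Rightarrow> bool) \<Rightarrow> bool" where
  "connected_graph E \<longleftrightarrow> (\<forall>u v. E\<^sup>*\<^sup>* u v)"

definition is_cycle :: "('v \<Rightarrow> 'v \<Rightarrow> bool) \<Rightarrow> 'v list \<Rightarrow> bool" where
  "is_cycle E cs \<longleftrightarrow> length cs \<ge> 3 \<and> distinct cs
     \<and> (\<forall>i. Suc i < length cs \<longrightarrow> E (cs ! i) (cs ! Suc i))
     \<and> E (last cs) (hd cs)"

definition acyclic_graph :: "('v \<Rightarrow> 'v \<Rightarrow> bool) \<Rightarrow> bool" where
  "acyclic_graph E \<longleftrightarrow> \<not> (\<exists>cs. is_cycle E cs)"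

definition is_tree :: "('v \<Rightarrow> 'v \<Rightarrow> bool) \<Rightarrow> bool" where
  "is_tree E \<longleftrightarrow> simple_graph E \<and> connected_graph E \<and> acyclic_graph E"

definition closed_nbhd :: "('v \<Rightarrow> 'v \<Rightarrow> bool) \<Rightarrow> 'v \<Rightarrow> 'v set" where
  "closed_nbhd E i = {j. E i j} \<union> {i}"

definition dominating_set :: "('v \<Rightarrow> 'v \<Rightarrow> bool) \<Rightarrow> 'v set \<Rightarrow> bool" where
  "dominating_set E S \<longleftrightarrow> (\<forall>v. S \<inter> closed_nbhd E v \<noteq> {})"

definition minimal_dominating_set :: "('v \<Rightarrow> 'v \<Rightarrow> bool) \<Rightarrow> 'v set \<Rightarrow> bool" where
  "minimal_dominating_set E S \<longleftrightarrow> dominating_set E S \<and> (\<forall>S'. S' \<subset> S \<longrightarrow> \<not> dominating_set E S')"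

definition is_ideal :: "'a::comm_ring_1 set \<Rightarrow> bool" where
  "is_ideal I \<longleftrightarrow> 0 \<in> I \<and> (\<forall>a\<in>I. \<forall>b\<in>I. a + b \<in> I) \<and> (\<forall>r. \<forall>a\<in>I. r * a \<in> I)"

definition ideal_gen :: "'a::comm_ring_1 set \<Rightarrow> 'a set" where
  "ideal_gen G = \<Inter>{I. is_ideal I \<and> G \<subseteq> I}"

definition ideal_pow :: "'a::comm_ring_1 set \<Rightarrow> nat \<Rightarrow> 'a set" where
  "ideal_pow I k = ideal_gen {\<Prod>i<k. f i | f. \<forall>i<k. f i \<in> I}"

definition prime_ideal :: "'a::comm_ring_1 set \<Rightarrow> bool" where
  "prime_ideal P \<longleftrightarrow> is_ideal P \<and> P \<noteq> UNIV \<and> (\<forall>a b. a * b \<in> P \<longrightarrow> a \<in> P \<or> b \<in> P)"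

text \<open>Associated primes of R/I: primes of the form (I : f) = Ann(f + I).\<close>
definition Ass :: "'a::comm_ring_1 set \<Rightarrow> 'a set set" where
  "Ass I = {P. prime_ideal P \<and> (\<exists>f. P = {g. g * f \<in> I})}"

definition normally_torsion_free :: "'a::comm_ring_1 set \<Rightarrow> bool" where
  "normally_torsion_free I \<longleftrightarrow> (\<forall>k\<ge>1. Ass (ideal_pow I k) \<subseteq> Ass I)"

text \<open>Polynomials in variables indexed by 'v with coefficients in 'k:
finitely supported maps from monomials (exponent vectors) to coefficients.\<close>
type_synonym ('v, 'k) mpoly = "('v \<Rightarrow>\<^sub>0 nat) \<Rightarrow>\<^sub>0 'k"

definition var :: "'v \<Rightarrow> ('v, 'k::comm_ring_1) mpoly" where
  "var v = Poly_Mapping.single (Poly_Mapping.single v 1) 1"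

definition dominating_ideal :: "('v \<Rightarrow> 'v \<Rightarrow> bool) \<Rightarrow> ('v, 'k::field) mpoly set" where
  "dominating_ideal E = ideal_gen {\<Prod>i\<in>S. var i | S. minimal_dominating_set E S}"

end

theory Submission
  imports Defs
begin

lemma is_ideal_gen: "is_ideal (ideal_gen G)"
  unfolding ideal_gen_def is_ideal_def by auto

lemma gen_subset: "G \<subseteq> ideal_gen G"
  unfolding ideal_gen_def by auto

lemma gen_least: "is_ideal I \<Longrightarrow> G \<subseteq> I \<Longrightarrow> ideal_gen G \<subseteq> I"
  unfolding ideal_gen_def by auto

lemma ideal_0: "is_ideal I \<Longrightarrow> 0 \<in> I" unfolding is_ideal_def by auto
lemma ideal_add: "is_ideal I \<Longrightarrow> a \<in> I \<Longrightarrow> b \<in> I \<Longrightarrow> a + b \<in> I" unfolding is_ideal_def by auto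
lemma ideal_mult_left: "is_ideal I \<Longrightarrow> a \<in> I \<Longrightarrow> r * a \<in> I" unfolding is_ideal_def by auto
lemma ideal_mult_right: "is_ideal I \<Longrightarrow> a \<in> I \<Longrightarrow> a * r \<in> I"
  using ideal_mult_left[of I a r] by (simp add: mult.commute)
lemma ideal_sum: "is_ideal I \<Longrightarrow> (\<And>x. x \<in> A \<Longrightarrow> f x \<in> I) \<Longrightarrow> sum f A \<in> I"
  by (induction A rule: infinite_finite_induct) (auto simp: ideal_0 ideal_add)

lemma ideal_gen_mult:
  fixes A B :: "'a::comm_ring_1 set"
  assumes J: "is_ideal J" and AB: "\<And>x y. x \<in> A \<Longrightarrow> y \<in> B \<Longrightarrow> x * y \<in> J"
    and x: "x \<in> ideal_gen A" and y: "y \<in> ideal_gen B"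
  shows "x * y \<in> J"
proof -
  have "\<forall>y\<in>B. x * y \<in> J"
  proof
    fix y assume yB: "y \<in> B"
    have "is_ideal {a. a * y \<in> J}"
      using J unfolding is_ideal_def by (auto simp: algebra_simps)
    moreover have "A \<subseteq> {a. a * y \<in> J}" using AB yB by auto
    ultimately show "x * y \<in> J" using gen_least x by blast
  qed
  moreover have "is_ideal {b. x * b \<in> J}"
    using J unfolding is_ideal_def by (auto simp: algebra_simps)
  ultimately show ?thesis using gen_least[of "{b. x * b \<in> J}" B] y by blast
qed

definition gens :: "'a::comm_ring_1 set \<Rightarrow> nat \<Rightarrow> 'a set" where
  "gens I k = {\<Prod>i<k. f i | f. \<forall>i<k. f i \<in> I}"

lemma ideal_pow_gens: "ideal_pow I k = ideal_gen (gens I k)"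
  unfolding ideal_pow_def gens_def ..

lemma gens_mult:
  assumes "x \<in> gens I j" "y \<in> gens I l" shows "x * y \<in> gens I (j + l)"
proof -
  obtain f where f: "x = (\<Prod>i<j. f i)" "\<forall>i<j. f i \<in> I" using assms(1) unfolding gens_def by auto
  obtain g where g: "y = (\<Prod>i<l. g i)" "\<forall>i<l. g i \<in> I" using assms(2) unfolding gens_def by auto
  define h where "h i = (if i < j then f i else g (i - j))" for i
  have "(\<Prod>i<j+m. h i) = (\<Prod>i<j. f i) * (\<Prod>i<m. g i)" for m
  proof (induction m)
    case 0 then show ?case by (simp add: h_def)
  next
    case (Suc m) then show ?case by (simp add: h_def mult_ac)
  qed
  moreover have "\<forall>i<j+l. h i \<in> I" using f g by (auto simp: h_def)
  ultimately show ?thesis unfolding gens_def using f g by (auto intro!: exI[of _ h])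
qed

lemma ideal_pow_mult:
  assumes "x \<in> ideal_pow I j" "y \<in> ideal_pow I l" shows "x * y \<in> ideal_pow I (j + l)"
  using ideal_gen_mult[OF is_ideal_gen _ assms[unfolded ideal_pow_gens]] gens_mult gen_subset
  unfolding ideal_pow_gens by blast

lemma gens_in_pow: "x \<in> gens I k \<Longrightarrow> x \<in> ideal_pow I k"
  using gen_subset ideal_pow_gens by blast

lemma one_in_pow0: "1 \<in> ideal_pow I 0"
  using gens_in_pow[of 1 I 0] unfolding gens_def by auto

lemma in_pow1: "x \<in> I \<Longrightarrow> x \<in> ideal_pow I 1"
  using gens_in_pow[of x I 1] unfolding gens_def by (auto intro!: exI[of _ "\<lambda>_. x"])

lemma pow1_ideal: "is_ideal I \<Longrightarrow> ideal_pow I 1 = I"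
proof
  assume I: "is_ideal I"
  show "ideal_pow I 1 \<subseteq> I" unfolding ideal_pow_gens
    by (rule gen_least[OF I]) (auto simp: gens_def)
qed (use in_pow1 in auto)

lemma pow_mono: "I \<subseteq> J \<Longrightarrow> ideal_pow I k \<subseteq> ideal_pow J k"
  unfolding ideal_pow_gens
  by (rule gen_least[OF is_ideal_gen]) (use gen_subset in \<open>force simp: gens_def\<close>)


definition mon :: "('v \<Rightarrow>\<^sub>0 nat) \<Rightarrow> ('v, 'k::comm_ring_1) mpoly" where
  "mon m = Poly_Mapping.single m 1"

definition MI :: "('v \<Rightarrow>\<^sub>0 nat) set \<Rightarrow> ('v, 'k::comm_ring_1) mpoly set" where
  "MI T = {p. Poly_Mapping.keys p \<subseteq> T}"

definition degS :: "'v set \<Rightarrow> ('v \<Rightarrow>\<^sub>0 nat) \<Rightarrow> nat" where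
  "degS S m = (\<Sum>v\<in>S. Poly_Mapping.lookup m v)"

definition Pk :: "'v set \<Rightarrow> nat \<Rightarrow> ('v, 'k::comm_ring_1) mpoly set" where
  "Pk S k = MI {m. k \<le> degS S m}"

lemma mon_mult: "mon a * mon b = mon (a + b)"
  by (simp add: mon_def mult_single)

lemma var_mon: "var v = mon (Poly_Mapping.single v 1)"
  by (simp add: var_def mon_def)

lemma keys_mon[simp]: "Poly_Mapping.keys (mon m :: ('v, 'k::comm_ring_1) mpoly) = {m}"
  by (simp add: mon_def)

lemma term_eq: "Poly_Mapping.single m c = Poly_Mapping.single 0 c * (mon m :: ('v, 'k::comm_ring_1) mpoly)"
  by (simp add: mon_def mult_single)

lemma poly_expand: "p = (\<Sum>m\<in>Poly_Mapping.keys p. Poly_Mapping.single m (Poly_Mapping.lookup p m))"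
proof (rule poly_mapping_eqI)
  fix x
  have "Poly_Mapping.lookup (\<Sum>m\<in>Poly_Mapping.keys p. Poly_Mapping.single m (Poly_Mapping.lookup p m)) x
      = (\<Sum>m\<in>Poly_Mapping.keys p. (if m = x then Poly_Mapping.lookup p m else 0))"
    by (simp add: lookup_sum lookup_single when_def)
  also have "\<dots> = Poly_Mapping.lookup p x"
    by (simp add: sum.delta in_keys_iff)
  finally show "Poly_Mapping.lookup p x = Poly_Mapping.lookup (\<Sum>m\<in>Poly_Mapping.keys p. Poly_Mapping.single m (Poly_Mapping.lookup p m)) x" by simp
qed

lemma MI_ideal:
  assumes up: "\<And>a b. a \<in> T \<Longrightarrow> a + b \<in> T"
  shows "is_ideal (MI T :: ('v, 'k::comm_ring_1) mpoly set)"
proof -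
  have "Poly_Mapping.keys (a + b) \<subseteq> T" if "Poly_Mapping.keys a \<subseteq> T" "Poly_Mapping.keys b \<subseteq> T"
    for a b :: "('v, 'k) mpoly"
    using that keys_add[of a b] by blast
  moreover have "Poly_Mapping.keys (r * a) \<subseteq> T" if "Poly_Mapping.keys a \<subseteq> T" for r a :: "('v, 'k) mpoly"
  proof
    fix x assume "x \<in> Poly_Mapping.keys (r * a)"
    then obtain c d where "x = c + d" "d \<in> Poly_Mapping.keys a" using keys_mult[of r a] by blast
    then show "x \<in> T" using up[of d c] that by (auto simp: add.commute)
  qed
  ultimately show ?thesis unfolding is_ideal_def MI_def by auto
qed

lemma MI_sub:
  assumes I: "is_ideal I" and m: "\<And>m. m \<in> T \<Longrightarrow> (mon m :: ('v, 'k::comm_ring_1) mpoly) \<in> I"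
  shows "MI T \<subseteq> I"
proof
  fix p :: "('v, 'k) mpoly" assume "p \<in> MI T"
  then have kp: "Poly_Mapping.keys p \<subseteq> T" by (simp add: MI_def)
  have "(\<Sum>m\<in>Poly_Mapping.keys p. Poly_Mapping.single m (Poly_Mapping.lookup p m)) \<in> I"
    using kp by (intro ideal_sum[OF I]) (metis term_eq ideal_mult_left[OF I] m subsetD)
  then show "p \<in> I" using poly_expand[of p] by simp
qed

lemma degS_add: "degS S (a + b) = degS S a + degS S b"
  by (simp add: degS_def lookup_add sum.distrib)

lemma degS_single: "degS (S :: 'v::finite set) (Poly_Mapping.single v 1) = (if v \<in> S then 1 else 0)"
  by (simp add: degS_def lookup_single when_def)

lemma Pk_ideal: "is_ideal (Pk S k)"
  unfolding Pk_def by (rule MI_ideal) (simp add: degS_add)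

lemma Pk_mult:
  assumes "p \<in> Pk S i" "q \<in> Pk S j" shows "p * q \<in> Pk S (i + j)"
  using assms keys_mult[of p q] unfolding Pk_def MI_def
  by (force simp: degS_add intro: add_mono)

lemma Pk_0[simp]: "Pk S 0 = UNIV"
  by (auto simp: Pk_def MI_def)

lemma mon_in_Pk: "(mon m :: ('v, 'k::comm_ring_1) mpoly) \<in> Pk S k \<longleftrightarrow> k \<le> degS S m"
  by (simp add: Pk_def MI_def)

lemma lookup_Abs_fin: "Poly_Mapping.lookup (Abs_poly_mapping (f :: 'v::finite \<Rightarrow> 'b::zero)) = f"
  by (simp add: lookup_Abs_poly_mapping)

lemma gens_Pk: "x \<in> gens (Pk S 1) k \<Longrightarrow> x \<in> Pk S k"
proof (induction k arbitrary: x)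
  case 0 then show ?case by simp
next
  case (Suc k)
  then obtain f where f: "x = (\<Prod>i<Suc k. f i)" "\<forall>i<Suc k. f i \<in> Pk S 1"
    unfolding gens_def by auto
  have "(\<Prod>i<k. f i) \<in> gens (Pk S 1) k" using f(2) unfolding gens_def by auto
  then have "(\<Prod>i<k. f i) \<in> Pk S k" by (rule Suc.IH)
  then show ?case using Pk_mult[of _ S k "f k" 1] f by simp
qed

lemma pow_Pk:
  fixes S :: "'v::finite set"
  shows "ideal_pow (Pk S 1 :: ('v, 'k::comm_ring_1) mpoly set) k = Pk S k"
proof
  show "ideal_pow (Pk S 1 :: ('v, 'k) mpoly set) k \<subseteq> Pk S k"
    unfolding ideal_pow_gens by (rule gen_least[OF Pk_ideal]) (use gens_Pk in blast)
next
  have "(mon m :: ('v, 'k) mpoly) \<in> ideal_pow (Pk S 1) k" if "k \<le> degS S m" for m k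
    using that
  proof (induction k arbitrary: m)
    case 0
    have "mon m * 1 \<in> ideal_pow (Pk S 1) 0"
      by (rule ideal_mult_left[OF _ one_in_pow0]) (simp add: ideal_pow_gens is_ideal_gen)
    then show ?case by simp
  next
    case (Suc k)
    then have "degS S m > 0" by simp
    have "\<exists>v\<in>S. Poly_Mapping.lookup m v \<noteq> 0"
    proof (rule ccontr)
      assume "\<not> ?thesis"
      then have "degS S m = 0" by (simp add: degS_def)
      with \<open>degS S m > 0\<close> show False by simp
    qed
    then obtain v where v: "v \<in> S" "Poly_Mapping.lookup m v > 0" by auto
    define m' where "m' = Abs_poly_mapping (\<lambda>u. Poly_Mapping.lookup m u - (if u = v then 1 else 0))"
    have lm': "Poly_Mapping.lookup m' u = Poly_Mapping.lookup m u - (if u = v then 1 else 0)" for u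
      by (simp add: m'_def lookup_Abs_fin)
    have meq: "m = m' + Poly_Mapping.single v 1"
      by (rule poly_mapping_eqI) (use v in \<open>simp add: lookup_add lm' lookup_single when_def\<close>)
    have "degS S m = degS S m' + 1"
      using v degS_single[of S v] by (simp add: meq degS_add)
    then have "(mon m' :: ('v, 'k) mpoly) \<in> ideal_pow (Pk S 1) k" using Suc.prems by (intro Suc.IH) simp
    moreover have "var v \<in> ideal_pow (Pk S 1 :: ('v, 'k) mpoly set) 1"
      by (rule in_pow1) (use v degS_single[of S v] in \<open>simp add: var_mon mon_in_Pk\<close>)
    ultimately have "mon m' * var v \<in> ideal_pow (Pk S 1 :: ('v, 'k) mpoly set) (k + 1)"
      by (rule ideal_pow_mult)
    then show ?case by (simp add: meq var_mon mon_mult)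
  qed
  note * = this
  show "Pk S k \<subseteq> ideal_pow (Pk S 1 :: ('v, 'k) mpoly set) k"
    unfolding Pk_def[of S k] apply (rule MI_sub)
    subgoal by (simp only: ideal_pow_gens is_ideal_gen)
    subgoal by (rule *) simp
    done
qed


lemma lookup_mult_fin:
  "Poly_Mapping.lookup (f * g) c =
    (\<Sum>a\<in>Poly_Mapping.keys f. \<Sum>b\<in>Poly_Mapping.keys g.
        (Poly_Mapping.lookup f a * Poly_Mapping.lookup g b when c = a + b))"
proof -
  have inner: "(\<Sum>q. Poly_Mapping.lookup g q when c = l + q)
      = (\<Sum>b\<in>Poly_Mapping.keys g. Poly_Mapping.lookup g b when c = l + b)" for l
    by (rule Sum_any.expand_superset) (auto simp: in_keys_iff)
  have "Poly_Mapping.lookup (f * g) c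
     = (\<Sum>l. Poly_Mapping.lookup f l * (\<Sum>b\<in>Poly_Mapping.keys g. Poly_Mapping.lookup g b when c = l + b))"
    by (simp add: lookup_mult inner)
  also have "\<dots> = (\<Sum>a\<in>Poly_Mapping.keys f. Poly_Mapping.lookup f a * (\<Sum>b\<in>Poly_Mapping.keys g. Poly_Mapping.lookup g b when c = a + b))"
    by (rule Sum_any.expand_superset) (auto simp: in_keys_iff)
  also have "\<dots> = (\<Sum>a\<in>Poly_Mapping.keys f. \<Sum>b\<in>Poly_Mapping.keys g.
        (Poly_Mapping.lookup f a * Poly_Mapping.lookup g b when c = a + b))"
    by (simp add: sum_distrib_left mult_when)
  finally show ?thesis .
qed

definition tau :: "('v \<Rightarrow> nat) \<Rightarrow> ('v \<Rightarrow>\<^sub>0 nat) \<Rightarrow> (nat \<Rightarrow>\<^sub>0 nat)" where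
  "tau \<iota> m = Abs_poly_mapping (\<lambda>n. if n \<in> range \<iota> then Poly_Mapping.lookup m (inv \<iota> n) else 0)"

lemma lookup_tau:
  fixes \<iota> :: "'v::finite \<Rightarrow> nat"
  shows "Poly_Mapping.lookup (tau \<iota> m) = (\<lambda>n. if n \<in> range \<iota> then Poly_Mapping.lookup m (inv \<iota> n) else 0)"
proof -
  have "finite {n. (if n \<in> range \<iota> then Poly_Mapping.lookup m (inv \<iota> n) else 0) \<noteq> 0}"
    by (rule finite_subset[of _ "range \<iota>"]) auto
  then show ?thesis unfolding tau_def by (simp add: lookup_Abs_poly_mapping)
qed

lemma tau_add:
  fixes \<iota> :: "'v::finite \<Rightarrow> nat"
  shows "tau \<iota> (a + b) = tau \<iota> a + tau \<iota> b"
  by (rule poly_mapping_eqI) (simp add: lookup_tau lookup_add)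

lemma tau_inj:
  fixes \<iota> :: "'v::finite \<Rightarrow> nat"
  assumes "inj \<iota>" "tau \<iota> a = tau \<iota> b" shows "a = b"
proof (rule poly_mapping_eqI)
  fix v
  have "Poly_Mapping.lookup (tau \<iota> a) (\<iota> v) = Poly_Mapping.lookup (tau \<iota> b) (\<iota> v)"
    using assms by simp
  then show "Poly_Mapping.lookup a v = Poly_Mapping.lookup b v"
    using assms(1) by (simp add: lookup_tau)
qed

lemma key_min:
  fixes f g :: "('v::finite, 'k::field) mpoly"
  assumes f0: "f \<noteq> 0" and g0: "g \<noteq> 0"
  shows "\<exists>c\<in>Poly_Mapping.keys (f * g).
           degS S c = Min (degS S ` Poly_Mapping.keys f) + Min (degS S ` Poly_Mapping.keys g)"
proof -
  obtain \<iota> :: "'v \<Rightarrow> nat" where inj: "inj \<iota>"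
    using finite_imp_inj_to_nat_seg[of "UNIV :: 'v set"] by auto
  define dF where "dF = Min (degS S ` Poly_Mapping.keys f)"
  define dG where "dG = Min (degS S ` Poly_Mapping.keys g)"
  define F where "F = {a\<in>Poly_Mapping.keys f. degS S a = dF}"
  define G where "G = {b\<in>Poly_Mapping.keys g. degS S b = dG}"
  have kf: "Poly_Mapping.keys f \<noteq> {}" "finite (Poly_Mapping.keys f)" using f0 by auto
  have kg: "Poly_Mapping.keys g \<noteq> {}" "finite (Poly_Mapping.keys g)" using g0 by auto
  have dFle: "a \<in> Poly_Mapping.keys f \<Longrightarrow> dF \<le> degS S a" for a
    unfolding dF_def using kf by simp
  have dGle: "b \<in> Poly_Mapping.keys g \<Longrightarrow> dG \<le> degS S b" for b
    unfolding dG_def using kg by simp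
  have "dF \<in> degS S ` Poly_Mapping.keys f" unfolding dF_def using kf by simp
  then have Fne: "F \<noteq> {}" "finite F" unfolding F_def using kf by auto
  have "dG \<in> degS S ` Poly_Mapping.keys g" unfolding dG_def using kg by simp
  then have Gne: "G \<noteq> {}" "finite G" unfolding G_def using kg by auto
  have "Max (tau \<iota> ` F) \<in> tau \<iota> ` F" using Fne by simp
  then obtain a0 where a0: "a0 \<in> F" "tau \<iota> a0 = Max (tau \<iota> ` F)" by auto
  have "Max (tau \<iota> ` G) \<in> tau \<iota> ` G" using Gne by simp
  then obtain b0 where b0: "b0 \<in> G" "tau \<iota> b0 = Max (tau \<iota> ` G)" by auto
  have amax: "a \<in> F \<Longrightarrow> tau \<iota> a \<le> tau \<iota> a0" for a using a0 Fne by simp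
  have bmax: "b \<in> G \<Longrightarrow> tau \<iota> b \<le> tau \<iota> b0" for b using b0 Gne by simp
  have uniq: "a = a0 \<and> b = b0"
    if a: "a \<in> Poly_Mapping.keys f" and b: "b \<in> Poly_Mapping.keys g" and ab: "a + b = a0 + b0" for a b
  proof -
    have "degS S a + degS S b = degS S a0 + degS S b0" using ab by (metis degS_add)
    moreover have "degS S a0 = dF" "degS S b0 = dG" using a0 b0 by (auto simp: F_def G_def)
    ultimately have "a \<in> F" "b \<in> G" using dFle[OF a] dGle[OF b] a b by (auto simp: F_def G_def)
    then have le: "tau \<iota> a \<le> tau \<iota> a0" "tau \<iota> b \<le> tau \<iota> b0" using amax bmax by auto
    have sum_eq: "tau \<iota> a + tau \<iota> b = tau \<iota> a0 + tau \<iota> b0" using ab by (metis tau_add)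
    have "tau \<iota> a = tau \<iota> a0"
    proof (rule ccontr)
      assume "tau \<iota> a \<noteq> tau \<iota> a0"
      then have "tau \<iota> a < tau \<iota> a0" using le by simp
      then have "tau \<iota> a + tau \<iota> b < tau \<iota> a0 + tau \<iota> b0" using le(2) by (rule add_less_le_mono)
      then show False using sum_eq by simp
    qed
    then have "a = a0" using tau_inj[OF inj] by blast
    then show ?thesis using ab by simp
  qed
  have a0k: "a0 \<in> Poly_Mapping.keys f" and b0k: "b0 \<in> Poly_Mapping.keys g"
    using a0 b0 by (auto simp: F_def G_def)
  have "Poly_Mapping.lookup (f * g) (a0 + b0) =
    (\<Sum>a\<in>Poly_Mapping.keys f. \<Sum>b\<in>Poly_Mapping.keys g.
        (if a = a0 \<and> b = b0 then Poly_Mapping.lookup f a0 * Poly_Mapping.lookup g b0 else 0))"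
    unfolding lookup_mult_fin
    proof (intro sum.cong refl)
    fix a b assume "a \<in> Poly_Mapping.keys f" "b \<in> Poly_Mapping.keys g"
    then have "a0 + b0 = a + b \<Longrightarrow> a = a0 \<and> b = b0" using uniq by metis
    then show "(Poly_Mapping.lookup f a * Poly_Mapping.lookup g b when a0 + b0 = a + b) =
      (if a = a0 \<and> b = b0 then Poly_Mapping.lookup f a0 * Poly_Mapping.lookup g b0 else 0)"
      unfolding when_def by (cases "a = a0 \<and> b = b0") auto
  qed
  also have "\<dots> = Poly_Mapping.lookup f a0 * Poly_Mapping.lookup g b0"
    proof -
    have "(\<Sum>b\<in>Poly_Mapping.keys g.
        (if a = a0 \<and> b = b0 then Poly_Mapping.lookup f a0 * Poly_Mapping.lookup g b0 else 0))
      = (if a = a0 then Poly_Mapping.lookup f a0 * Poly_Mapping.lookup g b0 else 0)" for a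
      using b0k kg(2) by (cases "a = a0") (simp_all add: sum.delta')
    then show ?thesis using a0k kf(2) by (simp add: sum.delta')
  qed
  also have "\<dots> \<noteq> 0" using a0k b0k by (simp add: in_keys_iff)
  finally have "a0 + b0 \<in> Poly_Mapping.keys (f * g)" by (simp add: in_keys_iff)
  moreover have "degS S (a0 + b0) = dF + dG"
    using a0 b0 by (simp add: degS_add F_def G_def)
  ultimately show ?thesis unfolding dF_def dG_def by blast
qed


lemma zero_in_Pk: "0 \<in> Pk S k" by (simp add: Pk_def MI_def)

lemma not_Pk: "p \<notin> Pk S k \<longleftrightarrow> (\<exists>m\<in>Poly_Mapping.keys p. degS S m < k)"
  by (auto simp: Pk_def MI_def not_le)

lemma Pk_colon:
  fixes f g :: "('v::finite, 'k::field) mpoly"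
  assumes f: "f \<notin> Pk S k" and g: "g \<notin> Pk S 1"
  shows "g * f \<notin> Pk S k"
proof -
  have f0: "f \<noteq> 0" and g0: "g \<noteq> 0" using f g zero_in_Pk by auto
  obtain mf where mf: "mf \<in> Poly_Mapping.keys f" "degS S mf < k" using f not_Pk by blast
  obtain mg where mg: "mg \<in> Poly_Mapping.keys g" "degS S mg < 1" using g not_Pk by blast
  have m1: "Min (degS S ` Poly_Mapping.keys f) \<le> degS S mf" using mf by (intro Min_le) auto
  have m2: "Min (degS S ` Poly_Mapping.keys g) \<le> degS S mg" using mg by (intro Min_le) auto
  obtain c where "c \<in> Poly_Mapping.keys (g * f)"
    "degS S c = Min (degS S ` Poly_Mapping.keys g) + Min (degS S ` Poly_Mapping.keys f)"
    using key_min[OF g0 f0, of S] by blast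
  then have "c \<in> Poly_Mapping.keys (g * f)" "degS S c < k" using mf mg m1 m2 by linarith+
  then show ?thesis using not_Pk by blast
qed

lemma Pk_prime:
  fixes S :: "'v::finite set"
  shows "prime_ideal (Pk S 1 :: ('v, 'k::field) mpoly set)"
  unfolding prime_ideal_def
proof (intro conjI allI impI)
  show "is_ideal (Pk S 1 :: ('v, 'k) mpoly set)" by (rule Pk_ideal)
  have "(1 :: ('v, 'k) mpoly) \<notin> Pk S 1"
    by (simp add: Pk_def MI_def degS_def)
  then show "Pk S 1 \<noteq> (UNIV :: ('v, 'k) mpoly set)" by auto
  fix a b :: "('v, 'k) mpoly"
  assume "a * b \<in> Pk S 1"
  then show "a \<in> Pk S 1 \<or> b \<in> Pk S 1" using Pk_colon[of b S 1 a] by auto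
qed

lemma var_in_Pk: "(var v :: ('v::finite, 'k::comm_ring_1) mpoly) \<in> Pk S 1 \<longleftrightarrow> v \<in> S"
  using degS_single[of S v] by (simp add: var_mon mon_in_Pk)

lemma Pk_sub_imp: "(Pk A 1 :: ('v::finite, 'k::comm_ring_1) mpoly set) \<subseteq> Pk B 1 \<Longrightarrow> A \<subseteq> B"
  using var_in_Pk[where 'k='k] by blast

lemma degS_mono: "A \<subseteq> (B :: 'v::finite set) \<Longrightarrow> degS A m \<le> degS B m"
  unfolding degS_def by (rule sum_mono2) auto

lemma Pk_mono: assumes "A \<subseteq> (B :: 'v::finite set)" shows "Pk A k \<subseteq> Pk B k"
  proof
  fix p assume p: "p \<in> Pk A k"
  have "k \<le> degS B m" if "m \<in> Poly_Mapping.keys p" for m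
    using p that degS_mono[OF assms, of m] unfolding Pk_def MI_def by force
  then show "p \<in> Pk B k" unfolding Pk_def MI_def by auto
qed

lemma split_var:
  fixes m :: "'v::finite \<Rightarrow>\<^sub>0 nat"
  assumes "Poly_Mapping.lookup m v > 0"
  shows "\<exists>m'. m = m' + Poly_Mapping.single v 1"
proof -
  define m' where "m' = Abs_poly_mapping (\<lambda>u. Poly_Mapping.lookup m u - (if u = v then 1 else 0))"
  have lm': "Poly_Mapping.lookup m' u = Poly_Mapping.lookup m u - (if u = v then 1 else 0)" for u
    by (simp add: m'_def lookup_Abs_fin)
  have "m = m' + Poly_Mapping.single v 1"
    by (rule poly_mapping_eqI) (use assms in \<open>simp add: lookup_add lm' lookup_single when_def\<close>)
  then show ?thesis ..
qed

lemma Pk1_sub: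
  fixes Q :: "('v::finite, 'k::comm_ring_1) mpoly set"
  assumes Q: "is_ideal Q" and vars: "\<And>v. v \<in> S \<Longrightarrow> var v \<in> Q"
  shows "Pk S 1 \<subseteq> Q"
  unfolding Pk_def
proof (rule MI_sub[OF Q])
  fix m assume "m \<in> {m. 1 \<le> degS S m}"
  then have "degS S m \<noteq> 0" by simp
  then obtain v where v: "v \<in> S" "Poly_Mapping.lookup m v \<noteq> 0"
  proof -
    have "\<exists>v\<in>S. Poly_Mapping.lookup m v \<noteq> 0"
    proof (rule ccontr)
      assume "\<not> ?thesis"
      then have "degS S m = 0" by (simp add: degS_def)
      with \<open>degS S m \<noteq> 0\<close> show False by simp
    qed
    then show ?thesis using that by blast
  qed
  then obtain m' where "m = m' + Poly_Mapping.single v 1" using split_var by blast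
  then have "mon m = mon m' * (var v :: ('v, 'k) mpoly)" by (simp add: var_mon mon_mult)
  then show "mon m \<in> Q" using ideal_mult_left[OF Q vars[OF v(1)]] by simp
qed

lemma prime_prod_notin:
  assumes P: "prime_ideal P" and "finite J" and "\<And>j. j \<in> J \<Longrightarrow> x j \<notin> P"
  shows "(\<Prod>j\<in>J. x j) \<notin> P"
  using assms(2,3)
proof (induction J rule: finite_induct)
  case empty
  have "1 \<notin> P"
  proof
    assume "1 \<in> P"
    then have "r * 1 \<in> P" for r using P unfolding prime_ideal_def is_ideal_def by blast
    then show False using P unfolding prime_ideal_def by auto
  qed
  then show ?case by simp
next
  case (insert a J)
  then show ?case using P unfolding prime_ideal_def by auto
qed

lemma prime_pow_notin:
  assumes P: "prime_ideal P" and "x \<notin> P" shows "x ^ k \<notin> P"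
  using prime_prod_notin[OF P, of "{..<k}" "\<lambda>_. x"] assms by simp


definition is_path :: "('v \<Rightarrow> 'v \<Rightarrow> bool) \<Rightarrow> 'v set \<Rightarrow> 'v list \<Rightarrow> bool" where
  "is_path E W xs \<longleftrightarrow> xs \<noteq> [] \<and> distinct xs \<and> set xs \<subseteq> W \<and>
     (\<forall>i. Suc i < length xs \<longrightarrow> E (xs ! i) (xs ! Suc i))"

lemma leaf_exists:
  assumes sym: "\<forall>u v. E u v \<longrightarrow> E v u" and irr: "\<forall>v. \<not> E v v"
    and acyc: "\<not> (\<exists>cs. is_cycle E cs)" and fin: "finite W" and ne: "W \<noteq> {}"
  shows "\<exists>v\<in>W. \<forall>u\<in>W. \<forall>u'\<in>W. E v u \<longrightarrow> E v u' \<longrightarrow> u = u'"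
proof -
  obtain w where w: "w \<in> W" using ne by auto
  have p0: "is_path E W [w]" using w by (simp add: is_path_def)
  have bnd: "\<forall>ys. is_path E W ys \<longrightarrow> length ys < card W + 1"
  proof (intro allI impI)
    fix ys assume "is_path E W ys"
    then have "length ys = card (set ys)" by (simp add: is_path_def distinct_card)
    moreover have "card (set ys) \<le> card W"
      using fin \<open>is_path E W ys\<close> by (intro card_mono) (auto simp: is_path_def)
    ultimately show "length ys < card W + 1" by simp
  qed
  obtain xs where xs: "is_path E W xs" and maxl: "\<forall>ys. is_path E W ys \<longrightarrow> length ys \<le> length xs"
    using ex_has_greatest_nat[OF p0 bnd] by blast
  have xsne: "xs \<noteq> []" and dist: "distinct xs" and sub: "set xs \<subseteq> W"
    and adj: "\<And>i. Suc i < length xs \<Longrightarrow> E (xs ! i) (xs ! Suc i)"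
    using xs by (auto simp: is_path_def)
  define v where "v = xs ! 0"
  have vW: "v \<in> W" using xsne sub by (simp add: v_def subsetD)
  have nb: "1 < length xs \<and> u = xs ! 1" if uW: "u \<in> W" and Evu: "E v u" for u
  proof -
    have "u \<in> set xs"
    proof (rule ccontr)
      assume un: "u \<notin> set xs"
      have "is_path E W (u # xs)"
        unfolding is_path_def
      proof (intro conjI allI impI)
        show "distinct (u # xs)" using un dist by simp
        show "set (u # xs) \<subseteq> W" using uW sub by simp
        fix i assume i: "Suc i < length (u # xs)"
        show "E ((u # xs) ! i) ((u # xs) ! Suc i)"
        proof (cases i)
          case 0 then show ?thesis using Evu sym by (simp add: v_def)
        next
          case (Suc j) then show ?thesis using i adj by simp
        qed
      qed simp
      then show False using maxl by fastforce
    qed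
    then obtain j where j: "j < length xs" "u = xs ! j" by (auto simp: in_set_conv_nth)
    have "j \<noteq> 0"
    proof
      assume "j = 0" then show False using j Evu irr by (simp add: v_def)
    qed
    moreover have "\<not> 2 \<le> j"
    proof
      assume j2: "2 \<le> j"
      define cs where "cs = take (Suc j) xs"
      have lcs: "length cs = Suc j" using j by (simp add: cs_def)
      have "is_cycle E cs"
        unfolding is_cycle_def
      proof (intro conjI allI impI)
        show "3 \<le> length cs" using lcs j2 by simp
        show "distinct cs" using dist by (simp add: cs_def)
        fix i assume "Suc i < length cs"
        then show "E (cs ! i) (cs ! Suc i)" using adj lcs j by (simp add: cs_def)
      next
        have "cs \<noteq> []" using lcs by auto
        then have "last cs = cs ! j" using lcs by (simp add: last_conv_nth)
        then have "last cs = xs ! j" using j by (simp add: cs_def)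
        moreover have "hd cs = v" using j xsne by (simp add: cs_def v_def hd_conv_nth)
        ultimately show "E (last cs) (hd cs)" using Evu sym j by simp
      qed
      then show False using acyc by blast
    qed
    ultimately show ?thesis using j by (cases j) (auto, case_tac nat, auto)
  qed
  show ?thesis using vW nb by metis
qed

lemma choose_set:
  assumes MA: "M \<subseteq> A" and Ak: "A \<subseteq> {..<k::nat}" and bk: "b \<le> k"
  shows "\<exists>X \<subseteq> {..<k}. card X = b \<and> card (M - X) \<le> card M - b \<and> card (A - X) \<le> card A - b"
proof -
  have fA: "finite A" using Ak finite_subset by blast
  have fM: "finite M" using MA fA finite_subset by blast
  have cMA: "card M \<le> card A" using MA fA card_mono by blast
  consider "b \<le> card M" | "card M < b" "b \<le> card A" | "card A < b" by linarith
  then show ?thesis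
  proof cases
    case 1
    then obtain X where X: "X \<subseteq> M" "card X = b" by (metis obtain_subset_with_card_n)
    have fX: "finite X" using X fM finite_subset by blast
    show ?thesis
      using X MA Ak fX by (intro exI[of _ X]) (auto simp: card_Diff_subset)
  next
    case 2
    have "b - card M \<le> card (A - M)" using 2 fM MA by (simp add: card_Diff_subset)
    then obtain Y where Y: "Y \<subseteq> A - M" "card Y = b - card M" by (metis obtain_subset_with_card_n)
    have fY: "finite Y" using Y fA finite_subset by blast
    have cX: "card (M \<union> Y) = b" using Y fM fY 2 by (subst card_Un_disjoint) auto
    have "A - (M \<union> Y) = (A - M) - Y" by auto
    then have "card (A - (M \<union> Y)) = card (A - M) - card Y"
      using Y fA by (simp add: card_Diff_subset fY)
    also have "\<dots> = card A - b" using Y 2 fM MA by (simp add: card_Diff_subset)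
    finally have "card (A - (M \<union> Y)) = card A - b" .
    moreover have "M - (M \<union> Y) = {}" by blast
    then have "card (M - (M \<union> Y)) = 0" by (simp only: card.empty)
    ultimately show ?thesis using MA Ak Y cX by (intro exI[of _ "M \<union> Y"]) auto
  next
    case 3
    have "b - card A \<le> card ({..<k} - A)" using 3 fA Ak bk by (simp add: card_Diff_subset)
    then obtain Y where Y: "Y \<subseteq> {..<k} - A" "card Y = b - card A" by (metis obtain_subset_with_card_n)
    have fY: "finite Y" using Y finite_subset by blast
    have cX: "card (A \<union> Y) = b" using Y fA fY 3 by (subst card_Un_disjoint) auto
    have "M - (A \<union> Y) = {}" "A - (A \<union> Y) = {}" using MA by auto
    then have "card (M - (A \<union> Y)) = 0" "card (A - (A \<union> Y)) = 0" by (simp_all only: card.empty)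
    then show ?thesis using MA Ak Y cX by (intro exI[of _ "A \<union> Y"]) auto
  qed
qed


lemma coloring:
  assumes sym: "\<forall>u v. E u v \<longrightarrow> E v u" and irr: "\<forall>v. \<not> E v v"
    and acyc: "\<not> (\<exists>cs. is_cycle E cs)" and fin: "finite W"
  shows "\<forall>e. (\<forall>u\<in>W. b u \<le> k) \<longrightarrow> (\<forall>v\<in>W. k \<le> (\<Sum>u\<in>closed_nbhd E v \<inter> W. b u) + e v) \<longrightarrow>
    (\<exists>C. (\<forall>u\<in>W. C u \<subseteq> {..<k::nat} \<and> card (C u) = b u) \<and>
         (\<forall>v\<in>W. card ({..<k} - (\<Union>u\<in>closed_nbhd E v \<inter> W. C u)) \<le> e v))"
  using fin
proof (induction W rule: finite_psubset_induct)
  case (psubset W)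
  show ?case
  proof (intro allI impI)
    fix e :: "'a \<Rightarrow> nat"
    assume bk: "\<forall>u\<in>W. b u \<le> k"
      and hyp: "\<forall>v\<in>W. k \<le> (\<Sum>u\<in>closed_nbhd E v \<inter> W. b u) + e v"
    show "\<exists>C. (\<forall>u\<in>W. C u \<subseteq> {..<k} \<and> card (C u) = b u) \<and>
         (\<forall>v\<in>W. card ({..<k} - (\<Union>u\<in>closed_nbhd E v \<inter> W. C u)) \<le> e v)"
    proof (cases "W = {}")
      case True then show ?thesis by auto
    next
      case False
      obtain v where vW: "v \<in> W" and leaf: "\<forall>u\<in>W. \<forall>u'\<in>W. E v u \<longrightarrow> E v u' \<longrightarrow> u = u'"
        using leaf_exists[OF sym irr acyc psubset.hyps(1) False] by blast
      define W' where "W' = W - {v}"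
      have W'sub: "W' \<subset> W" using vW by (auto simp: W'_def)
      have IH: "\<forall>e. (\<forall>u\<in>W'. b u \<le> k) \<longrightarrow> (\<forall>v\<in>W'. k \<le> (\<Sum>u\<in>closed_nbhd E v \<inter> W'. b u) + e v) \<longrightarrow>
          (\<exists>C. (\<forall>u\<in>W'. C u \<subseteq> {..<k} \<and> card (C u) = b u) \<and>
            (\<forall>v\<in>W'. card ({..<k} - (\<Union>u\<in>closed_nbhd E v \<inter> W'. C u)) \<le> e v))"
        using psubset.IH[OF W'sub] .
      have bk': "\<forall>u\<in>W'. b u \<le> k" using bk by (auto simp: W'_def)
      have finW: "finite W" by fact
      have nbv: "v \<in> closed_nbhd E v" by (simp add: closed_nbhd_def)
      show ?thesis
      proof (cases "\<exists>p\<in>W. E v p")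
        case False
        have same: "closed_nbhd E w \<inter> W = closed_nbhd E w \<inter> W'" if "w \<in> W'" for w
        proof -
          have "v \<notin> closed_nbhd E w" using that False sym vW by (auto simp: closed_nbhd_def W'_def)
          then show ?thesis by (auto simp: W'_def)
        qed
        have nv: "closed_nbhd E v \<inter> W = {v}" using False vW by (auto simp: closed_nbhd_def)
        have "\<forall>w\<in>W'. k \<le> (\<Sum>u\<in>closed_nbhd E w \<inter> W'. b u) + e w"
        proof
          fix w assume w: "w \<in> W'"
          then have "w \<in> W" by (simp add: W'_def)
          then have "k \<le> (\<Sum>u\<in>closed_nbhd E w \<inter> W. b u) + e w" using hyp by blast
          then show "k \<le> (\<Sum>u\<in>closed_nbhd E w \<inter> W'. b u) + e w" by (simp only: same[OF w])
        qed
        then obtain C' where C'1: "\<forall>u\<in>W'. C' u \<subseteq> {..<k} \<and> card (C' u) = b u"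
          and C'2: "\<forall>w\<in>W'. card ({..<k} - (\<Union>u\<in>closed_nbhd E w \<inter> W'. C' u)) \<le> e w"
          using IH bk' by blast
        have "b v \<le> card {..<k}" using bk vW by simp
        then obtain X where X: "X \<subseteq> {..<k}" "card X = b v" by (metis obtain_subset_with_card_n)
        define C where "C = C'(v := X)"
        have "\<forall>u\<in>W. C u \<subseteq> {..<k} \<and> card (C u) = b u"
          using C'1 X by (auto simp: C_def W'_def)
        moreover have "card ({..<k} - (\<Union>u\<in>closed_nbhd E w \<inter> W. C u)) \<le> e w" if wW: "w \<in> W" for w
        proof (cases "w = v")
          case True
          have "card ({..<k} - (\<Union>u\<in>closed_nbhd E w \<inter> W. C u)) = card ({..<k} - X)"
            using True nv by (simp add: C_def)
          also have "\<dots> = k - b v" using X by (simp add: card_Diff_subset finite_subset)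
          also have "\<dots> \<le> e v" using hyp vW nv by auto
          finally show ?thesis using True by simp
        next
          case False
          then have w': "w \<in> W'" using wW by (simp add: W'_def)
          have "(\<Union>u\<in>closed_nbhd E w \<inter> W. C u) = (\<Union>u\<in>closed_nbhd E w \<inter> W'. C' u)"
            using same[OF w'] by (auto simp: C_def W'_def)
          then show ?thesis using C'2 w' by simp
        qed
        ultimately show ?thesis by blast
      next
        case True
        then obtain p where pW: "p \<in> W" and Evp: "E v p" by blast
        have puniq: "\<And>u. u \<in> W \<Longrightarrow> E v u \<Longrightarrow> u = p" using leaf pW Evp by blast
        have pv: "p \<noteq> v" using Evp irr by auto
        have pW': "p \<in> W'" using pW pv by (simp add: W'_def)
        have same: "closed_nbhd E w \<inter> W = closed_nbhd E w \<inter> W'" if "w \<in> W'" "w \<noteq> p" for w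
        proof -
          have "v \<notin> closed_nbhd E w"
          proof
            assume "v \<in> closed_nbhd E w"
            then have "E w v \<or> w = v" by (auto simp: closed_nbhd_def)
            then show False using that puniq[of w] sym by (auto simp: W'_def)
          qed
          then show ?thesis by (auto simp: W'_def)
        qed
        have np: "closed_nbhd E p \<inter> W = insert v (closed_nbhd E p \<inter> W')"
          using Evp sym vW by (auto simp: closed_nbhd_def W'_def)
        have vnp: "v \<notin> closed_nbhd E p \<inter> W'" by (simp add: W'_def)
        have nv: "closed_nbhd E v \<inter> W = {v, p}"
        proof
          show "closed_nbhd E v \<inter> W \<subseteq> {v, p}"
          proof
            fix u assume "u \<in> closed_nbhd E v \<inter> W"
            then have "u \<in> W" "E v u \<or> u = v" by (auto simp: closed_nbhd_def)
            then show "u \<in> {v, p}" using puniq[of u] by blast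
          qed
          show "{v, p} \<subseteq> closed_nbhd E v \<inter> W" using vW pW Evp by (auto simp: closed_nbhd_def)
        qed
        have finW': "finite W'" using finW by (simp add: W'_def)
        define e' where "e' = e(p := e p + b v)"
        have hyp': "\<forall>w\<in>W'. k \<le> (\<Sum>u\<in>closed_nbhd E w \<inter> W'. b u) + e' w"
        proof
          fix w assume w: "w \<in> W'"
          show "k \<le> (\<Sum>u\<in>closed_nbhd E w \<inter> W'. b u) + e' w"
          proof (cases "w = p")
            case True
            have "(\<Sum>u\<in>closed_nbhd E p \<inter> W. b u) = b v + (\<Sum>u\<in>closed_nbhd E p \<inter> W'. b u)"
              unfolding np using vnp finW' by (simp add: sum.insert)
            moreover have "k \<le> (\<Sum>u\<in>closed_nbhd E p \<inter> W. b u) + e p" using hyp pW by blast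
            ultimately show ?thesis using True by (simp add: e'_def)
          next
            case False
            then show ?thesis using hyp w same[OF w False] pv by (auto simp: e'_def W'_def)
          qed
        qed
        obtain C' where C'1: "\<forall>u\<in>W'. C' u \<subseteq> {..<k} \<and> card (C' u) = b u"
          and C'2: "\<forall>w\<in>W'. card ({..<k} - (\<Union>u\<in>closed_nbhd E w \<inter> W'. C' u)) \<le> e' w"
          using IH bk' hyp' by blast
        define M where "M = {..<k} - (\<Union>u\<in>closed_nbhd E p \<inter> W'. C' u)"
        define A where "A = {..<k} - C' p"
        have pnp: "p \<in> closed_nbhd E p \<inter> W'" using pW' by (simp add: closed_nbhd_def)
        have MA: "M \<subseteq> A" using pnp by (auto simp: M_def A_def)
        have Ak: "A \<subseteq> {..<k}" by (auto simp: A_def)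
        have cA: "card A = k - b p"
        proof -
          have "C' p \<subseteq> {..<k}" "card (C' p) = b p" using C'1 pW' by auto
          moreover have "finite (C' p)" using \<open>C' p \<subseteq> {..<k}\<close> finite_subset by blast
          ultimately show ?thesis by (simp add: A_def card_Diff_subset)
        qed
        have cM: "card M \<le> e p + b v" using C'2[rule_format, OF pW'] by (simp add: M_def e'_def)
        obtain X where X: "X \<subseteq> {..<k}" "card X = b v" "card (M - X) \<le> card M - b v"
            "card (A - X) \<le> card A - b v"
          using choose_set[OF MA Ak, of "b v"] bk vW by blast
        define C where "C = C'(v := X)"
        have "\<forall>u\<in>W. C u \<subseteq> {..<k} \<and> card (C u) = b u"
          using C'1 X by (auto simp: C_def W'_def)
        moreover have "card ({..<k} - (\<Union>u\<in>closed_nbhd E w \<inter> W. C u)) \<le> e w" if wW: "w \<in> W" for w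
        proof -
          consider "w = v" | "w = p" | "w \<noteq> v" "w \<noteq> p" by blast
          then show ?thesis
          proof cases
            case 1
            have "(\<Union>u\<in>closed_nbhd E w \<inter> W. C u) = X \<union> C' p"
              using 1 nv pv by (auto simp: C_def)
            then have "{..<k} - (\<Union>u\<in>closed_nbhd E w \<inter> W. C u) = A - X" by (auto simp: A_def)
            moreover have "k \<le> b v + b p + e v"
              using hyp vW nv pv by auto
            ultimately show ?thesis using X(4) cA 1 by simp
          next
            case 2
            have "(\<Union>u\<in>closed_nbhd E w \<inter> W. C u) = X \<union> (\<Union>u\<in>closed_nbhd E p \<inter> W'. C' u)"
              using 2 np vnp by (auto simp: C_def)
            then have "{..<k} - (\<Union>u\<in>closed_nbhd E w \<inter> W. C u) = M - X" by (auto simp: M_def)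
            then show ?thesis using X(3) cM 2 by simp
          next
            case 3
            then have w': "w \<in> W'" using wW by (simp add: W'_def)
            have "(\<Union>u\<in>closed_nbhd E w \<inter> W. C u) = (\<Union>u\<in>closed_nbhd E w \<inter> W'. C' u)"
              using same[OF w' 3(2)] by (auto simp: C_def W'_def)
            then show ?thesis using C'2[rule_format, OF w'] 3 by (simp add: e'_def)
          qed
        qed
        ultimately show ?thesis by blast
      qed
    qed
  qed
qed


lemma exists_minimal:
  fixes D :: "'v::finite set"
  assumes "dominating_set E D" shows "\<exists>M\<subseteq>D. minimal_dominating_set E M"
  using assms
proof (induction "card D" arbitrary: D rule: less_induct)
  case less
  show ?case
  proof (cases "minimal_dominating_set E D")
    case True then show ?thesis by blast
  next
    case False
    then obtain D' where D': "D' \<subset> D" "dominating_set E D'"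
      using less.prems by (auto simp: minimal_dominating_set_def)
    then have "card D' < card D" by (simp add: psubset_card_mono)
    then obtain M where "M \<subseteq> D'" "minimal_dominating_set E M" using less.hyps D' by blast
    then show ?thesis using D' by blast
  qed
qed

lemma sum_ind_card: "(\<Sum>j<(k::nat). if j \<in> X then 1 else 0 :: nat) = card ({..<k} \<inter> X)"
proof -
  have "card ({..<k} \<inter> X) = (\<Sum>j\<in>{..<k} \<inter> X. 1)" by simp
  also have "\<dots> = (\<Sum>j<k. if j \<in> X then 1 else 0)" by (rule sum.inter_restrict) simp
  finally show ?thesis by simp
qed

lemma dom_decomp:
  fixes E :: "'v::finite \<Rightarrow> 'v \<Rightarrow> bool" and m :: "'v \<Rightarrow>\<^sub>0 nat"
  assumes sym: "\<forall>u v. E u v \<longrightarrow> E v u" and irr: "\<forall>v. \<not> E v v"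
    and acyc: "\<not> (\<exists>cs. is_cycle E cs)"
    and deg: "\<And>v. k \<le> degS (closed_nbhd E v) m"
  shows "\<exists>D. (\<forall>j<k. minimal_dominating_set E (D j)) \<and>
             (\<forall>u. (\<Sum>j<k. if u \<in> D j then 1 else 0) \<le> Poly_Mapping.lookup m u)"
proof -
  define b where "b u = min (Poly_Mapping.lookup m u) k" for u
  have bk: "\<forall>u\<in>UNIV. b u \<le> k" by (simp add: b_def)
  have hyp: "\<forall>v\<in>UNIV. k \<le> (\<Sum>u\<in>closed_nbhd E v \<inter> UNIV. b u) + (\<lambda>_. 0) v"
  proof
    fix v :: 'v
    show "k \<le> (\<Sum>u\<in>closed_nbhd E v \<inter> UNIV. b u) + (\<lambda>_. 0) v"
    proof (cases "\<exists>u\<in>closed_nbhd E v. k \<le> Poly_Mapping.lookup m u")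
      case True
      then obtain u where u: "u \<in> closed_nbhd E v" "k \<le> Poly_Mapping.lookup m u" by blast
      have "b u \<le> (\<Sum>u\<in>closed_nbhd E v. b u)" using u by (intro member_le_sum) auto
      then show ?thesis using u by (simp add: b_def)
    next
      case False
      then have "(\<Sum>u\<in>closed_nbhd E v. b u) = degS (closed_nbhd E v) m"
        unfolding degS_def b_def by (intro sum.cong) auto
      then show ?thesis using deg[of v] by simp
    qed
  qed
  note col = mp[OF mp[OF coloring[OF sym irr acyc finite_UNIV, of b k, THEN spec[of _ "\<lambda>_. 0"]] bk] hyp]
  obtain C where C1: "\<forall>u\<in>UNIV. C u \<subseteq> {..<k} \<and> card (C u) = b u"
    and C2: "\<forall>v\<in>UNIV. card ({..<k} - (\<Union>u\<in>closed_nbhd E v \<inter> UNIV. C u)) \<le> (\<lambda>_. 0::nat) v"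
    using col by blast
  define D0 where "D0 j = {u. j \<in> C u}" for j
  have dom: "dominating_set E (D0 j)" if jk: "j < k" for j
    unfolding dominating_set_def
  proof
    fix v
    have "card ({..<k} - (\<Union>u\<in>closed_nbhd E v. C u)) = 0" using C2[rule_format, of v] by simp
    then have "{..<k} - (\<Union>u\<in>closed_nbhd E v. C u) = {}" by simp
    then obtain u where "u \<in> closed_nbhd E v" "j \<in> C u" using jk by blast
    then show "D0 j \<inter> closed_nbhd E v \<noteq> {}" by (auto simp: D0_def)
  qed
  have ex: "\<exists>M. j < k \<longrightarrow> M \<subseteq> D0 j \<and> minimal_dominating_set E M" for j
  proof (cases "j < k")
    case True then show ?thesis using exists_minimal[OF dom[OF True]] by blast
  qed simp
  have ch: "\<exists>D. \<forall>j. j < k \<longrightarrow> D j \<subseteq> D0 j \<and> minimal_dominating_set E (D j)"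
    by (rule choice) (rule allI, rule ex)
  from ch obtain D where D0': "\<forall>j. j < k \<longrightarrow> D j \<subseteq> D0 j \<and> minimal_dominating_set E (D j)"
    by (elim exE)
  have D: "\<And>j. j < k \<Longrightarrow> D j \<subseteq> D0 j \<and> minimal_dominating_set E (D j)" using D0' by blast
  have cnt: "(\<Sum>j<k. if u \<in> D j then 1 else 0) \<le> Poly_Mapping.lookup m u" for u
  proof -
    have "(\<Sum>j<k. if u \<in> D j then 1 else 0) \<le> (\<Sum>j<k. if u \<in> D0 j then 1 else (0::nat))"
      using D by (intro sum_mono) auto
    also have "\<dots> = (\<Sum>j<k. if j \<in> C u then 1 else 0)" by (simp add: D0_def)
    also have "\<dots> = card ({..<k} \<inter> C u)" by (rule sum_ind_card)
    also have "\<dots> = b u" using C1 by (simp add: Int_absorb1)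
    also have "\<dots> \<le> Poly_Mapping.lookup m u" by (simp add: b_def)
    finally show ?thesis .
  qed
  show ?thesis using D cnt by blast
qed


definition ind :: "'v set \<Rightarrow> ('v \<Rightarrow>\<^sub>0 nat)" where
  "ind S = (\<Sum>i\<in>S. Poly_Mapping.single i 1)"

lemma lookup_ind: "Poly_Mapping.lookup (ind (S :: 'v::finite set)) u = (if u \<in> S then 1 else 0)"
  by (simp add: ind_def lookup_sum lookup_single when_def)

lemma mon_zero: "(mon 0 :: ('v, 'k::comm_ring_1) mpoly) = 1"
  by (simp add: mon_def)

lemma prod_var: "finite S \<Longrightarrow> (\<Prod>i\<in>S. var i :: ('v, 'k::comm_ring_1) mpoly) = mon (ind S)"
proof (induction S rule: finite_induct)
  case empty then show ?case by (simp add: ind_def mon_zero)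
next
  case (insert a S)
  then show ?case by (simp add: ind_def var_mon mon_mult)
qed

lemma prod_mon: "(\<Prod>j<(k::nat). mon (f j) :: ('v, 'k::comm_ring_1) mpoly) = mon (\<Sum>j<k. f j)"
  by (induction k) (simp_all add: mon_zero mon_mult)

lemma degS_ind: "degS T (ind (S :: 'v::finite set)) = card (S \<inter> T)"
proof -
  have "degS T (ind S) = (\<Sum>v\<in>T. if v \<in> S then 1 else 0)" by (simp add: degS_def lookup_ind)
  also have "\<dots> = (\<Sum>v\<in>T \<inter> S. 1)" by (rule sum.inter_restrict[symmetric]) simp
  also have "\<dots> = card (S \<inter> T)" by (simp add: Int_commute)
  finally show ?thesis .
qed

lemma DI_sub_P:
  fixes E :: "'v::finite \<Rightarrow> 'v \<Rightarrow> bool"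
  shows "(dominating_ideal E :: ('v, 'k::field) mpoly set) \<subseteq> Pk (closed_nbhd E v) 1"
  unfolding dominating_ideal_def
proof (rule gen_least[OF Pk_ideal], clarify)
  fix S assume S: "minimal_dominating_set E S"
  then have "S \<inter> closed_nbhd E v \<noteq> {}"
    by (simp add: minimal_dominating_set_def dominating_set_def)
  then have "1 \<le> card (S \<inter> closed_nbhd E v)" by (simp add: Suc_le_eq card_gt_0_iff)
  then show "(\<Prod>i\<in>S. var i :: ('v, 'k) mpoly) \<in> Pk (closed_nbhd E v) 1"
    by (simp add: prod_var mon_in_Pk degS_ind)
qed

lemma DIpow_sub:
  fixes E :: "'v::finite \<Rightarrow> 'v \<Rightarrow> bool"
  shows "ideal_pow (dominating_ideal E :: ('v, 'k::field) mpoly set) k \<subseteq> Pk (closed_nbhd E v) k"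
proof -
  have "ideal_pow (dominating_ideal E :: ('v, 'k) mpoly set) k \<subseteq> ideal_pow (Pk (closed_nbhd E v) 1) k"
    by (rule pow_mono[OF DI_sub_P])
  also have "\<dots> = Pk (closed_nbhd E v) k" by (rule pow_Pk)
  finally show ?thesis .
qed

lemma Inter_sub_DIpow:
  fixes E :: "'v::finite \<Rightarrow> 'v \<Rightarrow> bool"
  assumes sym: "\<forall>u v. E u v \<longrightarrow> E v u" and irr: "\<forall>v. \<not> E v v"
    and acyc: "\<not> (\<exists>cs. is_cycle E cs)"
    and p: "\<forall>v. (p :: ('v, 'k::field) mpoly) \<in> Pk (closed_nbhd E v) k"
  shows "p \<in> ideal_pow (dominating_ideal E) k"
proof -
  define T where "T = {m. \<forall>v. k \<le> degS (closed_nbhd E v) m}"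
  have pT: "p \<in> MI T" using p by (auto simp: T_def MI_def Pk_def)
  have "MI T \<subseteq> ideal_pow (dominating_ideal E :: ('v, 'k) mpoly set) k"
  proof (rule MI_sub)
    show "is_ideal (ideal_pow (dominating_ideal E :: ('v, 'k) mpoly set) k)"
      by (simp add: ideal_pow_gens is_ideal_gen)
  next
    fix m assume "m \<in> T"
    then have deg: "\<And>v. k \<le> degS (closed_nbhd E v) m" by (simp add: T_def)
    obtain D where D1: "\<forall>j<k. minimal_dominating_set E (D j)"
      and D2: "\<forall>u. (\<Sum>j<k. if u \<in> D j then 1 else 0) \<le> Poly_Mapping.lookup m u"
      using dom_decomp[OF sym irr acyc deg] by blast
    define s where "s = (\<Sum>j<k. ind (D j))"
    have ls: "Poly_Mapping.lookup s u = (\<Sum>j<k. if u \<in> D j then 1 else 0)" for u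
      by (simp add: s_def lookup_sum lookup_ind)
    define m0 where "m0 = Abs_poly_mapping (\<lambda>u. Poly_Mapping.lookup m u - Poly_Mapping.lookup s u)"
    have meq: "m = m0 + s"
    proof (rule poly_mapping_eqI)
      fix u
      have "Poly_Mapping.lookup s u \<le> Poly_Mapping.lookup m u" using D2 ls by simp
      then show "Poly_Mapping.lookup m u = Poly_Mapping.lookup (m0 + s) u"
        by (simp add: m0_def lookup_Abs_fin lookup_add)
    qed
    have mem: "(mon (ind (D j)) :: ('v, 'k) mpoly) \<in> dominating_ideal E" if "j < k" for j
    proof -
      have "minimal_dominating_set E (D j)" using D1 that by blast
      then have "(\<Prod>i\<in>D j. var i :: ('v, 'k) mpoly) \<in> {\<Prod>i\<in>S. var i | S. minimal_dominating_set E S}"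
        by (intro CollectI exI[of _ "D j"]) simp
      then have "(\<Prod>i\<in>D j. var i :: ('v, 'k) mpoly) \<in> dominating_ideal E"
        unfolding dominating_ideal_def by (rule subsetD[OF gen_subset])
      then show ?thesis by (simp only: prod_var[OF finite])
    qed
    have "(\<Prod>j<k. mon (ind (D j)) :: ('v, 'k) mpoly) \<in> gens (dominating_ideal E) k"
      unfolding gens_def using mem by (intro CollectI exI[of _ "\<lambda>j. mon (ind (D j))"]) simp
    then have "(\<Prod>j<k. mon (ind (D j)) :: ('v, 'k) mpoly) \<in> ideal_pow (dominating_ideal E) k"
      by (rule gens_in_pow)
    then have "mon m0 * (\<Prod>j<k. mon (ind (D j)) :: ('v, 'k) mpoly) \<in> ideal_pow (dominating_ideal E) k"
      by (intro ideal_mult_left) (simp_all add: ideal_pow_gens is_ideal_gen)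
    moreover have "mon m0 * (\<Prod>j<k. mon (ind (D j)) :: ('v, 'k) mpoly) = mon m"
      by (simp add: prod_mon mon_mult meq s_def)
    ultimately show "(mon m :: ('v, 'k) mpoly) \<in> ideal_pow (dominating_ideal E) k" by simp
  qed
  then show ?thesis using pT by blast
qed

lemma DIpow_eq:
  fixes E :: "'v::finite \<Rightarrow> 'v \<Rightarrow> bool"
  assumes sym: "\<forall>u v. E u v \<longrightarrow> E v u" and irr: "\<forall>v. \<not> E v v"
    and acyc: "\<not> (\<exists>cs. is_cycle E cs)"
  shows "(p :: ('v, 'k::field) mpoly) \<in> ideal_pow (dominating_ideal E) k \<longleftrightarrow>
         (\<forall>v. p \<in> Pk (closed_nbhd E v) k)"
  using Inter_sub_DIpow[OF sym irr acyc] DIpow_sub[of E k] by blast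


lemma Pk_pow: "x \<in> Pk S 1 \<Longrightarrow> x ^ k \<in> Pk S k"
proof (induction k)
  case 0 then show ?case by simp
next
  case (Suc k)
  then have "x * x ^ k \<in> Pk S (1 + k)" by (intro Pk_mult) auto
  then show ?case by simp
qed

theorem corollary2p19:
  fixes E :: "'v::finite \<Rightarrow> 'v \<Rightarrow> bool"
  assumes "is_tree E"
  shows "normally_torsion_free (dominating_ideal E :: ('v, 'k::field) mpoly set)"
proof -
  have sym: "\<forall>u v. E u v \<longrightarrow> E v u" and irr: "\<forall>v. \<not> E v v"
    and acyc: "\<not> (\<exists>cs. is_cycle E cs)"
    using assms by (auto simp: is_tree_def simple_graph_def acyclic_graph_def)
  define I where "I = (dominating_ideal E :: ('v, 'k) mpoly set)"
  define N where "N = closed_nbhd E"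
  define P where "P v = (Pk (N v) 1 :: ('v, 'k) mpoly set)" for v
  have eqk: "x \<in> ideal_pow I k \<longleftrightarrow> (\<forall>v. x \<in> Pk (N v) k)" for x k
    unfolding I_def N_def by (rule DIpow_eq[OF sym irr acyc])
  have Iideal: "is_ideal I" by (simp add: I_def dominating_ideal_def is_ideal_gen)
  have eq1: "x \<in> I \<longleftrightarrow> (\<forall>v. x \<in> P v)" for x
    using eqk[of x 1] pow1_ideal[OF Iideal] by (simp add: P_def)
  have Pprime: "prime_ideal (P v)" for v unfolding P_def by (rule Pk_prime)
  have Pideal: "is_ideal (P v)" for v unfolding P_def by (rule Pk_ideal)
  have assI: "P v \<in> Ass I" if minv: "\<And>w. N w \<subseteq> N v \<Longrightarrow> N v \<subseteq> N w" for v
  proof -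
    define f' where "f' = (mon (ind (UNIV - N v)) :: ('v, 'k) mpoly)"
    have "(UNIV - N v) \<inter> N v = {}" by blast
    then have f'not: "f' \<notin> P v"
      by (simp add: f'_def P_def mon_in_Pk degS_ind)
    have "P v = {g. g * f' \<in> I}"
    proof (intro set_eqI iffI)
      fix g assume g: "g \<in> P v"
      have "g * f' \<in> P w" for w
      proof (cases "N w \<subseteq> N v")
        case True
        then have "N w = N v" using minv by blast
        then show ?thesis using ideal_mult_right[OF Pideal g] by (simp add: P_def)
      next
        case False
        then obtain j where "j \<in> N w" "j \<notin> N v" by blast
        then have "(UNIV - N v) \<inter> N w \<noteq> {}" by blast
        then have "1 \<le> card ((UNIV - N v) \<inter> N w)" by (simp add: Suc_le_eq card_gt_0_iff)
        then have "f' \<in> P w" by (simp add: f'_def P_def mon_in_Pk degS_ind)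
        then show ?thesis by (rule ideal_mult_left[OF Pideal])
      qed
      then show "g \<in> {g. g * f' \<in> I}" using eq1 by blast
    next
      fix g assume "g \<in> {g. g * f' \<in> I}"
      then have "g * f' \<in> P v" using eq1 by blast
      then show "g \<in> P v" using Pk_colon[of f' "N v" 1 g] f'not by (auto simp: P_def)
    qed
    then show ?thesis using Pprime unfolding Ass_def by blast
  qed
  show ?thesis
    unfolding normally_torsion_free_def I_def[symmetric]
  proof (intro allI impI subsetI)
    fix k :: nat and Q assume k1: "1 \<le> k" and QA: "Q \<in> Ass (ideal_pow I k)"
    then obtain f where Qp: "prime_ideal Q" and Qf: "Q = {g. g * f \<in> ideal_pow I k}"
      unfolding Ass_def by blast
    have Qideal: "is_ideal Q" using Qp by (simp add: prime_ideal_def)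
    define J where "J = {v. f \<notin> Pk (N v) k}"
    have QsubP: "Q \<subseteq> P w" if "w \<in> J" for w
    proof
      fix g assume "g \<in> Q"
      then have "g * f \<in> Pk (N w) k" using Qf eqk by blast
      then show "g \<in> P w" using Pk_colon[of f "N w" k g] that by (auto simp: J_def P_def)
    qed
    have "\<exists>v\<in>J. P v \<subseteq> Q"
    proof (rule ccontr)
      assume "\<not> ?thesis"
      then have "\<forall>v\<in>J. \<exists>u\<in>N v. var u \<notin> Q"
        using Pk1_sub[OF Qideal] unfolding P_def by blast
      then obtain u where u: "\<And>v. v \<in> J \<Longrightarrow> u v \<in> N v \<and> var (u v) \<notin> Q" by metis
      define h where "h = (\<Prod>v\<in>J. var (u v) ^ k :: ('v, 'k) mpoly)"
      have "h \<notin> Q" unfolding h_def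
      proof (rule prime_prod_notin[OF Qp])
        fix v assume "v \<in> J"
        then show "var (u v) ^ k \<notin> Q" using u prime_pow_notin[OF Qp] by blast
      qed simp
      moreover have "h * f \<in> Pk (N w) k" for w
      proof (cases "w \<in> J")
        case True
        have "var (u w) \<in> P w" using u[OF True] var_in_Pk[of "u w" "N w", where 'k='k]
          unfolding P_def by blast
        then have "(var (u w) :: ('v, 'k) mpoly) ^ k \<in> Pk (N w) k" unfolding P_def by (rule Pk_pow)
        moreover have "h = var (u w) ^ k * (\<Prod>v\<in>J - {w}. var (u v) ^ k :: ('v, 'k) mpoly)"
          unfolding h_def using True by (simp add: prod.remove)
        ultimately have "h \<in> Pk (N w) k" using ideal_mult_right[OF Pk_ideal] by metis
        then show ?thesis by (rule ideal_mult_right[OF Pk_ideal])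
      next
        case False
        then have "f \<in> Pk (N w) k" by (simp add: J_def)
        then show ?thesis by (rule ideal_mult_left[OF Pk_ideal])
      qed
      then have "h \<in> Q" using Qf eqk by blast
      ultimately show False by blast
    qed
    then obtain v where vJ: "v \<in> J" and PQ: "P v \<subseteq> Q" by blast
    have Qeq: "Q = P v" using PQ QsubP[OF vJ] by blast
    have "N v \<subseteq> N w" if "N w \<subseteq> N v" for w
    proof -
      have "w \<in> J"
      proof (rule ccontr)
        assume "w \<notin> J"
        then have "f \<in> Pk (N w) k" by (simp add: J_def)
        then have "f \<in> Pk (N v) k" using Pk_mono[OF that] by blast
        then show False using vJ by (simp add: J_def)
      qed
      then have "P v \<subseteq> P w" using QsubP Qeq by blast
      then show ?thesis unfolding P_def by (rule Pk_sub_imp)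
    qed
    then show "Q \<in> Ass I" using assI Qeq by blast
  qed
qed

end
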